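(* Let $p>2$ be a prime, $n\ge1$, $A$ a finite abelian $p$-group and $G$ a group containing $A$ as a normal subgroup with $G/A\cong\mathbb{Z}_{p^n}$, generated by the image of an element $t\in G$. If $[e]_\varphi$ is a subgroup of $G$ for every $\varphi\in{\rm Aut}\,G$, then there is a homomorphism $\theta:A\to\Omega_n(A)$ such that $t^{-1}at=a\,\theta(a)$ for all $a\in A$, and $\theta(\Omega_k(A))\le\Omega_{k-1}(A)$ for all $1\le k\le n$.
   Context: For an automorphism $\varphi$ of $G$, $[e]_\varphi=\{z^{-1}\varphi(z)\mid z\in G\}$. $\Omega_k(A)=\{a\in A\mid a^{p^k}=e\}$; in particular $\Omega_0(A)=\{e\}$. *)

theory Defs
  imports "HOL-Algebra.Algebra"
begin

definition Omega :: "('a, 'b) monoid_scheme \<Rightarrow> nat \<Rightarrow> 'a set \<Rightarrow> nat \<Rightarrow> 'a set" where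
  "Omega G p A k = {a \<in> A. a [^]\<^bsub>G\<^esub> (p ^ k) = \<one>\<^bsub>G\<^esub>}"

definition twisted_class_e :: "('a, 'b) monoid_scheme \<Rightarrow> ('a \<Rightarrow> 'a) \<Rightarrow> 'a set" where
  "twisted_class_e G \<phi> = {inv\<^bsub>G\<^esub> z \<otimes>\<^bsub>G\<^esub> \<phi> z | z. z \<in> carrier G}"

end

theory Submission
  imports Defs
begin


lemma (in comm_group) hom_finprod_atMost:
  assumes f: "f \<in> hom G G" and h: "h \<in> UNIV \<rightarrow> carrier G"
  shows "f (\<Otimes>j\<in>{..(k::nat)}. h j) = (\<Otimes>j\<in>{..k}. f (h j))"
proof (induction k)
  case 0 then show ?case using h f by (simp add: Pi_def hom_in_carrier)
next
  case (Suc k)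
  have hc: "\<And>j. h j \<in> carrier G" using h by auto
  have fc: "\<And>j. f (h j) \<in> carrier G" using hc f hom_in_carrier by metis
  show ?case using Suc hc fc f by (simp add: Pi_def hom_mult finprod_closed)
qed

lemma (in comm_group) binom_hom:
  assumes f: "f \<in> hom G G" and x: "x \<in> carrier G"
  shows "((\<lambda>y. y \<otimes> f y) ^^ m) x = (\<Otimes>j\<in>{..m}. (f ^^ j) x [^] (m choose j))"
proof (induction m)
  case 0 then show ?case using x by simp
next
  case (Suc m)
  have fj: "\<And>j. (f ^^ j) x \<in> carrier G"
  proof -
    fix j show "(f ^^ j) x \<in> carrier G"
      by (induction j) (use x f hom_in_carrier in auto)
  qed
  have fj2: "\<And>j. f ((f ^^ j) x) \<in> carrier G" using fj f hom_in_carrier by metis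
  define F where "F = (\<lambda>j. (f ^^ j) x [^] (m choose j))"
  define P where "P = (\<Otimes>j\<in>{..m}. F j)"
  define Q where "Q = (\<Otimes>i\<in>{..m}. (f ^^ Suc i) x [^] (m choose Suc i))"
  have Fc: "F \<in> UNIV \<rightarrow> carrier G" using fj by (simp add: F_def)
  have Pc: "P \<in> carrier G" using Fc by (simp add: P_def Pi_def finprod_closed)
  have fP: "f P = (\<Otimes>i\<in>{..m}. (f ^^ Suc i) x [^] (m choose i))"
    unfolding P_def using hom_finprod_atMost[OF f Fc]
    by (simp add: F_def hom_nat_pow[OF f] fj)
  have "P = Q \<otimes> x"
  proof -
    have "(\<Otimes>j\<in>{..Suc m}. F j) = F (Suc m) \<otimes> P"
      using Fc by (simp add: P_def Pi_def)
    also have "\<dots> = P" using Pc by (simp add: F_def binomial_eq_0)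
    finally have 1: "(\<Otimes>j\<in>{..Suc m}. F j) = P" .
    have "(\<Otimes>j\<in>{..Suc m}. F j) = (\<Otimes>i\<in>{..m}. F (Suc i)) \<otimes> F 0"
      using Fc by (intro finprod_Suc2) (simp add: Pi_def)
    also have "\<dots> = Q \<otimes> x" using x by (simp add: F_def Q_def)
    finally show ?thesis using 1 by simp
  qed
  have "(\<Otimes>j\<in>{..Suc m}. (f ^^ j) x [^] (Suc m choose j))
        = (\<Otimes>i\<in>{..m}. (f ^^ Suc i) x [^] (Suc m choose Suc i)) \<otimes> x"
    using fj x by (subst finprod_Suc2) (auto simp: Pi_def)
  also have "\<dots> = (\<Otimes>i\<in>{..m}. (f ^^ Suc i) x [^] (m choose i) \<otimes> (f ^^ Suc i) x [^] (m choose Suc i)) \<otimes> x"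
    using fj fj2 by (simp add: nat_pow_mult)
  also have "\<dots> = f P \<otimes> Q \<otimes> x"
    unfolding fP Q_def using fj fj2 by (subst finprod_multf) (auto simp: Pi_def)
  also have "\<dots> = P \<otimes> f P"
  proof -
    have Qc: "Q \<in> carrier G" using fj fj2 by (simp add: Q_def Pi_def)
    have fPc: "f P \<in> carrier G" using Pc f hom_in_carrier by metis
    show ?thesis using \<open>P = Q \<otimes> x\<close> Qc fPc x by (simp add: m_ac)
  qed
  finally show ?case using Suc by (simp add: P_def F_def)
qed



lemma (in group) cancel_l1 [simp]: "x \<in> carrier G \<Longrightarrow> y \<in> carrier G \<Longrightarrow> inv x \<otimes> (x \<otimes> y) = y"
  by (simp add: m_assoc[symmetric])
lemma (in group) cancel_l2 [simp]: "x \<in> carrier G \<Longrightarrow> y \<in> carrier G \<Longrightarrow> x \<otimes> (inv x \<otimes> y) = y"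
  by (simp add: m_assoc[symmetric])

lemma (in group) subgroup_npow_closed:
  assumes "subgroup H G" "x \<in> H" shows "x [^] (k::nat) \<in> H"
  by (induction k) (use assms in \<open>auto simp: subgroup.one_closed subgroup.m_closed\<close>)

lemma prime_power_dvd_choose:
  fixes p :: nat
  assumes "Factorial_Ring.prime p" "0 < j" "j < p ^ n"
  shows "p dvd (p ^ n choose j)"
proof (rule ccontr)
  assume np: "\<not> p dvd (p ^ n choose j)"
  have "j * (p ^ n choose j) = p ^ n * ((p ^ n - 1) choose (j - 1))"
    using times_binomial_minus1_eq[OF assms(2)] by simp
  hence "p ^ n dvd j * (p ^ n choose j)" by simp
  moreover have "coprime (p ^ n) (p ^ n choose j)"
    using np assms(1) by (simp add: prime_imp_coprime)
  ultimately have "p ^ n dvd j" using coprime_dvd_mult_left_iff by blast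
  thus False using assms(2,3) by (simp add: nat_dvd_not_less)
qed

locale setting = normal A G for A and G (structure) +
  fixes t :: 'a and p n :: nat
  assumes commA: "\<And>a b. a \<in> A \<Longrightarrow> b \<in> A \<Longrightarrow> a \<otimes> b = b \<otimes> a"
    and finA: "finite A"
    and prime: "Factorial_Ring.prime p" and p2: "p > 2" and n1: "n \<ge> 1"
    and cardA: "\<exists>m. card A = p ^ m"
    and t: "t \<in> carrier G"
    and iso: "(G Mod A) \<cong> integer_mod_group (p ^ n)"
    and gen: "generate (G Mod A) {A #> t} = carrier (G Mod A)"
begin

abbreviation "q \<equiv> p ^ n"

lemma q_pos: "q > 0" using prime prime_gt_0_nat by simp

lemma Q_group: "group (G Mod A)"
  by (rule factorgroup_is_group)

lemma Q_card: "card (carrier (G Mod A)) = q"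
  using iso_same_card[OF iso] q_pos by (simp add: carrier_integer_mod_group flip: of_nat_power)

lemma Q_fin: "finite (carrier (G Mod A))"
  using Q_card q_pos card.infinite by fastforce

lemma At_in: "A #> t \<in> carrier (G Mod A)"
  using t by (auto simp: carrier_FactGroup)

lemma ord_At: "group.ord (G Mod A) (A #> t) = q"
  using group.generate_pow_card[OF Q_group At_in] gen Q_card by simp

lemma tpow_in_A_iff: "t [^] (k::nat) \<in> A \<longleftrightarrow> q dvd k"
proof -
  have "(A #> t) [^]\<^bsub>G Mod A\<^esub> k = A #> (t [^] k)"
    using FactGroup_pow[OF t] by (simp add: FactGroup_def)
  hence "A #> (t [^] k) = A \<longleftrightarrow> q dvd k"
    using group.pow_eq_id[OF Q_group At_in, of k] ord_At by simp
  moreover have "A #> (t [^] k) = A \<longleftrightarrow> t [^] k \<in> A"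
  proof
    assume "A #> t [^] k = A" thus "t [^] k \<in> A"
      using rcos_self[of "t [^] k" A] t subgroup_axioms by auto
  next
    assume "t [^] k \<in> A" thus "A #> t [^] k = A"
      using coset_join2[of "t [^] k" A] t subgroup_axioms by auto
  qed
  ultimately show ?thesis by simp
qed

lemma tq_in: "t [^] q \<in> A" using tpow_in_A_iff by simp

lemma idx_exists:
  assumes g: "g \<in> carrier G"
  shows "\<exists>i<q. g \<otimes> inv (t [^] i) \<in> A"
proof -
  have "A #> g \<in> carrier (G Mod A)" using g by (auto simp: carrier_FactGroup)
  also have "\<dots> = {(A #> t) [^]\<^bsub>G Mod A\<^esub> k | k. k \<in> (UNIV :: nat set)}"
    using gen group.generate_pow_on_finite_carrier[OF Q_group Q_fin At_in] by simp
  finally obtain k :: nat where "A #> g = (A #> t) [^]\<^bsub>G Mod A\<^esub> k" by blast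
  also have "\<dots> = A #> (t [^] k)"
    using FactGroup_pow[OF t] by (simp add: FactGroup_def)
  finally have eq: "A #> g = A #> (t [^] k)" .
  have "g \<in> A #> (t [^] k)" using eq rcos_self[OF g subgroup_axioms] by simp
  then obtain a where a: "a \<in> A" "g = a \<otimes> t [^] k" unfolding r_coset_def by auto
  have ac: "a \<in> carrier G" using a subset by auto
  define r where "r = k mod q"
  define d where "d = k div q"
  have k: "k = r + q * d" by (simp add: r_def d_def)
  define T where "T = (t [^] q) [^] d"
  have T: "T \<in> A" unfolding T_def using tq_in
    by (simp add: subgroup_npow_closed[OF subgroup_axioms])
  have Tc: "T \<in> carrier G" using T subset by auto
  have tk: "t [^] k = t [^] r \<otimes> T"
    unfolding T_def k using t by (simp add: nat_pow_mult[symmetric] nat_pow_pow)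
  have "g \<otimes> inv (t [^] r) = a \<otimes> (t [^] r \<otimes> T \<otimes> inv (t [^] r))"
    using a(2) tk t Tc ac by (simp add: m_assoc)
  also have "\<dots> \<in> A" using inv_op_closed2[of "t [^] r" T] T t a(1) by simp
  finally have "g \<otimes> inv (t [^] r) \<in> A" .
  moreover have "r < q" using q_pos by (simp add: r_def)
  ultimately show ?thesis by blast
qed

lemma conj_rep:
  assumes z: "z \<in> carrier G" and zi: "z \<otimes> inv (t [^] (i::nat)) \<in> A" and a: "a \<in> A"
  shows "inv z \<otimes> a \<otimes> z = inv (t [^] i) \<otimes> a \<otimes> t [^] i"
proof -
  define c where "c = z \<otimes> inv (t [^] i)"
  have c: "c \<in> A" using zi c_def by simp
  have cc: "c \<in> carrier G" using c subset by auto
  have ac: "a \<in> carrier G" using a subset by auto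
  have zc: "z = c \<otimes> t [^] i" using z t by (simp add: c_def m_assoc)
  have "inv c \<otimes> (a \<otimes> c) = a" using commA[OF a c] cc ac by simp
  hence "inv c \<otimes> (a \<otimes> (c \<otimes> t [^] i)) = a \<otimes> t [^] i"
    using cc ac t by (simp add: m_assoc[symmetric])
  thus ?thesis using zc cc ac t by (simp add: m_assoc inv_mult_group)
qed

end


context setting begin

definition sig where "sig x = inv t \<otimes> x \<otimes> t"
definition th where "th x = inv x \<otimes> sig x"
abbreviation "AG \<equiv> G\<lparr>carrier := A\<rparr>"

lemma Ac: "x \<in> A \<Longrightarrow> x \<in> carrier G" using subset by auto
lemma A_mult: "x \<in> A \<Longrightarrow> y \<in> A \<Longrightarrow> x \<otimes> y \<in> A"
  using subgroup.m_closed[OF subgroup_axioms] by blast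
lemma A_inv: "x \<in> A \<Longrightarrow> inv x \<in> A"
  using subgroup.m_inv_closed[OF subgroup_axioms] by blast
lemma A_pow: "x \<in> A \<Longrightarrow> x [^] (k::nat) \<in> A"
  using subgroup_npow_closed[OF subgroup_axioms] by blast

lemma sig_A: "x \<in> A \<Longrightarrow> sig x \<in> A"
  unfolding sig_def using inv_op_closed1 t by simp

lemma th_A: "x \<in> A \<Longrightarrow> th x \<in> A"
  unfolding th_def using sig_A by (simp add: m_closed m_inv_closed)

lemma sig_th: "x \<in> A \<Longrightarrow> sig x = x \<otimes> th x"
  unfolding th_def using sig_A Ac by simp

lemma sig_mult: "x \<in> A \<Longrightarrow> y \<in> A \<Longrightarrow> sig (x \<otimes> y) = sig x \<otimes> sig y"
  unfolding sig_def using Ac t by (simp add: m_assoc)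

lemma th_mult: assumes "x \<in> A" "y \<in> A" shows "th (x \<otimes> y) = th x \<otimes> th y"
proof -
  have c: "inv x \<in> A" "inv y \<in> A" "sig x \<in> A" "sig y \<in> A"
    using assms sig_A by (auto simp: m_inv_closed)
  have "th (x \<otimes> y) = inv y \<otimes> (inv x \<otimes> sig x) \<otimes> sig y"
    unfolding th_def using assms Ac c by (simp add: sig_mult inv_mult_group m_assoc)
  also have "\<dots> = (inv x \<otimes> sig x) \<otimes> inv y \<otimes> sig y"
    using commA[of "inv y" "inv x \<otimes> sig x"] c by (simp add: m_closed)
  finally show ?thesis unfolding th_def using c Ac by (simp add: m_assoc)
qed

lemma th_one: "th \<one> = \<one>" unfolding th_def sig_def using t by simp

lemma th_pow: "x \<in> A \<Longrightarrow> th (x [^] (k::nat)) = th x [^] k"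
  by (induction k) (auto simp: th_one th_mult subgroup_npow_closed[OF subgroup_axioms])

lemma thj_A: "x \<in> A \<Longrightarrow> (th ^^ j) x \<in> A"
  by (induction j) (auto simp: th_A)

lemma thj_pow: "x \<in> A \<Longrightarrow> (th ^^ j) (x [^] (k::nat)) = ((th ^^ j) x) [^] k"
  by (induction j) (auto simp: th_pow thj_A)

lemma thj_one: "(th ^^ j) \<one> = \<one>"
  by (induction j) (auto simp: th_one)

lemma sig_iter: "x \<in> A \<Longrightarrow> (sig ^^ k) x = inv (t [^] k) \<otimes> x \<otimes> t [^] k"
proof (induction k)
  case 0 then show ?case using Ac by simp
next
  case (Suc k)
  then show ?case using t Ac[OF Suc.prems]
    by (simp add: sig_def inv_mult_group m_assoc)
qed

lemma sig_q: assumes "x \<in> A" shows "(sig ^^ q) x = x"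
proof -
  have "x \<otimes> t [^] q = t [^] q \<otimes> x" using commA[OF assms tq_in] .
  thus ?thesis using sig_iter[OF assms] Ac[OF assms] t by (simp add: m_assoc)
qed

lemma AG_comm: "comm_group AG"
proof -
  have "group AG" using subgroup_imp_group[OF subgroup_axioms] .
  thus ?thesis by (rule group.group_comm_groupI) (use commA in auto)
qed

lemma pow_AG: "x [^]\<^bsub>AG\<^esub> (k::nat) = x [^] k"
  by (rule nat_pow_consistent[symmetric])

lemma th_hom: "th \<in> hom AG AG"
  unfolding hom_def using th_A th_mult by auto

lemma binomA:
  assumes x: "x \<in> A"
  shows "(sig ^^ m) x = finprod AG (\<lambda>j. (th ^^ j) x [^] (m choose j)) {..m}"
proof -
  interpret AG: comm_group AG by (rule AG_comm)
  have "((\<lambda>y. y \<otimes>\<^bsub>AG\<^esub> th y) ^^ m) x = finprod AG (\<lambda>j. (th ^^ j) x [^]\<^bsub>AG\<^esub> (m choose j)) {..m}"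
    using AG.binom_hom[OF th_hom] x by simp
  moreover have "((\<lambda>y. y \<otimes>\<^bsub>AG\<^esub> th y) ^^ m) x = (sig ^^ m) x"
  proof -
    have "((\<lambda>y. y \<otimes>\<^bsub>AG\<^esub> th y) ^^ k) x = (sig ^^ k) x \<and> (sig ^^ k) x \<in> A" for k
      by (induction k) (use x in \<open>auto simp: sig_th sig_A A_mult th_A\<close>)
    thus ?thesis by simp
  qed
  ultimately show ?thesis by (simp add: pow_AG)
qed

lemma nilpotent:
  assumes x: "x \<in> A" and xp: "x [^] p = \<one>"
  shows "(th ^^ q) x = \<one>"
proof -
  interpret AG: comm_group AG by (rule AG_comm)
  define F where "F = (\<lambda>j. (th ^^ j) x [^] (q choose j))"
  have Fc: "F \<in> UNIV \<rightarrow> A" unfolding F_def using thj_A[OF x]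
    by (auto simp: subgroup_npow_closed[OF subgroup_axioms])
  have F1: "F j = \<one>" if j: "0 < j" "j < q" for j
  proof -
    obtain c where c: "q choose j = p * c"
      using prime_power_dvd_choose[OF prime j] by blast
    have "F j = (((th ^^ j) x) [^] p) [^] c"
      unfolding F_def c using thj_A[OF x] Ac by (simp add: nat_pow_pow)
    also have "((th ^^ j) x) [^] p = \<one>" using thj_pow[OF x, of j p] xp thj_one by simp
    hence "(((th ^^ j) x) [^] p) [^] c = \<one>" by simp
    finally show ?thesis .
  qed
  obtain r where r: "q = Suc r" using q_pos gr0_implies_Suc by blast
  have "x = (sig ^^ q) x" using sig_q[OF x] by simp
  also have "\<dots> = finprod AG F {..q}" unfolding F_def using binomA[OF x] by simp
  also have "\<dots> = F q \<otimes> finprod AG F {..<q}"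
    using AG.finprod_Suc3[of F q] Fc by auto
  also have "finprod AG F {..<q} = finprod AG F {..r}"
    using r lessThan_Suc_atMost by simp
  also have "\<dots> = F 0 \<otimes> finprod AG F {Suc 0..r}"
    using AG.finprod_0'[of F r] Fc by (auto simp: Pi_def)
  also have "finprod AG F {Suc 0..r} = \<one>"
    using AG.finprod_one_eqI[of "{Suc 0..r}" F] F1 r by auto
  finally have "x = F q \<otimes> (F 0 \<otimes> \<one>)" .
  moreover have "F 0 = x" using x Ac by (simp add: F_def)
  moreover have "F q = (th ^^ q) x" using thj_A[OF x] Ac by (simp add: F_def)
  ultimately have "x = (th ^^ q) x \<otimes> x" using x Ac by simp
  thus ?thesis using thj_A[OF x] Ac x
    by (metis l_one right_cancel one_closed)
qed

end


lemma (in group) inner_iso: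
  assumes a: "a \<in> carrier G"
  shows "(\<lambda>z. a \<otimes> z \<otimes> inv a) \<in> iso G G"
proof -
  have hom: "(\<lambda>z. a \<otimes> z \<otimes> inv a) \<in> hom G G"
    unfolding hom_def using a by (auto simp: m_assoc)
  have "bij_betw (\<lambda>z. a \<otimes> z \<otimes> inv a) (carrier G) (carrier G)"
    by (rule bij_betwI[where g = "\<lambda>z. inv a \<otimes> z \<otimes> a"]) (use a in \<open>auto simp: m_assoc\<close>)
  thus ?thesis using hom by (simp add: iso_def)
qed

locale setting2 = setting +
  assumes twist: "\<forall>\<phi>\<in>iso G G. subgroup (twisted_class_e G \<phi>) G"
begin

lemma claim1:
  assumes a: "a \<in> A"
  shows "th a [^] q = \<one>"
proof -
  have ac: "a \<in> carrier G" using Ac a .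
  define S where "S = twisted_class_e G (\<lambda>z. a \<otimes> z \<otimes> inv a)"
  have sub: "subgroup S G" unfolding S_def using twist inner_iso[OF ac] by blast
  define x where "x = th a"
  have xA: "x \<in> A" using th_A a x_def by simp
  have xc: "x \<in> carrier G" using Ac xA .
  have xS: "x \<in> S"
  proof -
    have "x = sig a \<otimes> inv a"
      unfolding x_def th_def using commA[OF A_inv[OF a] sig_A[OF a]] .
    also have "\<dots> = inv t \<otimes> (a \<otimes> t \<otimes> inv a)"
      unfolding sig_def using t ac by (simp add: m_assoc)
    finally show ?thesis unfolding S_def twisted_class_e_def using t by blast
  qed
  have Ssub: "S \<subseteq> (\<lambda>i. inv (t [^] i) \<otimes> a \<otimes> t [^] i \<otimes> inv a) ` {..<q}"
  proof
    fix s assume "s \<in> S"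
    then obtain z where z: "z \<in> carrier G" "s = inv z \<otimes> (a \<otimes> z \<otimes> inv a)"
      unfolding S_def twisted_class_e_def by blast
    obtain i where i: "i < q" "z \<otimes> inv (t [^] i) \<in> A" using idx_exists[OF z(1)] by blast
    have "s = inv z \<otimes> a \<otimes> z \<otimes> inv a" using z ac by (simp add: m_assoc)
    also have "\<dots> = inv (t [^] i) \<otimes> a \<otimes> t [^] i \<otimes> inv a"
      using conj_rep[OF z(1) i(2) a] by simp
    finally show "s \<in> (\<lambda>i. inv (t [^] i) \<otimes> a \<otimes> t [^] i \<otimes> inv a) ` {..<q}" using i(1) by blast
  qed
  have finS: "finite S" using Ssub finite_surj by blast
  have cardS: "card S \<le> q"
  proof -
    have "card S \<le> card ((\<lambda>i. inv (t [^] i) \<otimes> a \<otimes> t [^] i \<otimes> inv a) ` {..<q})"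
      using card_mono[OF _ Ssub] by blast
    also have "\<dots> \<le> card {..<q}" by (rule card_image_le) simp
    finally show ?thesis by simp
  qed
  have powS: "x [^] (j::nat) \<in> S" for j using subgroup_npow_closed[OF sub xS] .
  have "\<not> inj_on (\<lambda>j. x [^] j) {..q}"
  proof
    assume "inj_on (\<lambda>j. x [^] j) {..q}"
    hence "card {..q} \<le> card S" using card_inj_on_le[of _ "{..q}" S] finS powS by blast
    thus False using cardS by simp
  qed
  then obtain i j where ij: "i \<le> q" "j \<le> q" "i < j" "x [^] i = x [^] j"
    unfolding inj_on_def by (metis atMost_iff linorder_neqE_nat)
  define d where "d = j - i"
  have d: "0 < d" "d \<le> q" using ij by (auto simp: d_def)
  have "x [^] i \<otimes> x [^] d = x [^] i \<otimes> \<one>"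
  proof -
    have "x [^] i \<otimes> x [^] d = x [^] (i + d)" using xc by (simp add: nat_pow_mult)
    also have "i + d = j" using ij by (simp add: d_def)
    finally show ?thesis using ij xc by simp
  qed
  hence xd: "x [^] d = \<one>" using xc by (metis l_cancel nat_pow_closed one_closed)
  obtain m where m: "card A = p ^ m" using cardA by blast
  have "x [^]\<^bsub>AG\<^esub> order AG = \<one>\<^bsub>AG\<^esub>"
    using group.pow_order_eq_1[OF subgroup_imp_group[OF subgroup_axioms]] xA by simp
  hence xm: "x [^] (p ^ m) = \<one>" using m by (simp add: pow_AG order_def)
  have "ord x dvd p ^ m" using pow_eq_id[OF xc] xm by simp
  then obtain s where s: "ord x = p ^ s" using divides_primepow_nat[OF prime] by blast
  have "p ^ s dvd d" using pow_eq_id[OF xc] xd s by simp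
  hence "p ^ s \<le> d" using d(1) by (rule dvd_imp_le)
  hence "p ^ s \<le> p ^ n" using d(2) by linarith
  hence "s \<le> n" using p2 by (simp add: power_le_imp_le_exp)
  hence "ord x dvd q" using s by (simp add: le_imp_power_dvd)
  thus ?thesis using pow_eq_id[OF xc] x_def by simp
qed

end


lemma two_choose2: "2 * (k choose 2) = k * (k - 1)"
proof (induction k)
  case 0 then show ?case by simp
next
  case (Suc k)
  have "Suc k choose 2 = k + (k choose 2)"
    using binomial_Suc_Suc[of k 1] by (simp add: numeral_2_eq_2)
  hence "2 * (Suc k choose 2) = 2 * k + k * (k - 1)" using Suc by simp
  also have "\<dots> = Suc k * k" by (cases k) (simp_all add: algebra_simps)
  finally show ?case by simp
qed

lemma odd_prime_dvd_double:
  fixes p x :: nat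
  assumes "Factorial_Ring.prime p" "p > 2" "p dvd 2 * x" shows "p dvd x"
proof -
  have "\<not> p dvd 2" using assms(2) by (auto dest: dvd_imp_le)
  thus ?thesis using assms prime_dvd_mult_iff by blast
qed

lemma choose2_mod:
  fixes p s :: nat
  assumes "Factorial_Ring.prime p" "p > 2"
  shows "\<exists>k. (2 + p * s) choose 2 = 1 + p * k"
proof -
  define C where "C = (2 + p * s) choose 2"
  have "2 * C = (2 + p * s) * (1 + p * s)" using two_choose2[of "2 + p*s"] by (simp add: C_def)
  also have "\<dots> = 2 + p * (s * (3 + p * s))" by (simp add: algebra_simps)
  finally have e: "2 * C = 2 + p * (s * (3 + p * s))" .
  hence C1: "C \<ge> 1" by linarith
  have "2 * (C - 1) = p * (s * (3 + p * s))" using e C1 by simp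
  hence "p dvd 2 * (C - 1)" by simp
  hence "p dvd C - 1" using odd_prime_dvd_double[OF assms] by blast
  then obtain k where "C - 1 = p * k" by blast
  hence "C = 1 + p * k" using C1 by simp
  thus ?thesis unfolding C_def by blast
qed

lemma prime_dvd_choose2_q:
  fixes p :: nat
  assumes "Factorial_Ring.prime p" "p > 2" "n \<ge> 1"
  shows "p dvd (p ^ n choose 2)"
proof -
  have "p dvd p ^ n" using assms(3) by (simp add: dvd_power)
  hence "p dvd 2 * (p ^ n choose 2)" unfolding two_choose2 by simp
  thus ?thesis using odd_prime_dvd_double[OF assms(1,2)] by blast
qed

locale bctx = setting2 +
  fixes b
  assumes bA: "b \<in> A" and bp: "b [^] p = \<one>" and thth: "th (th b) = \<one>"
begin

definition "c = th b"
definition "u = t \<otimes> b"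
definition "N k = inv (t [^] (k::nat)) \<otimes> u [^] k"

lemma cA: "c \<in> A" using th_A bA c_def by simp
lemma bc: "b \<in> carrier G" using Ac bA .
lemma cc: "c \<in> carrier G" using Ac cA .
lemma uc: "u \<in> carrier G" using t bc u_def by simp
lemma thc: "th c = \<one>" using thth c_def by simp
lemma cp: "c [^] p = \<one>" using th_pow[OF bA, of p] bp th_one c_def by simp

lemma A_lcomm: "x \<in> A \<Longrightarrow> y \<in> A \<Longrightarrow> z \<in> A \<Longrightarrow> x \<otimes> (y \<otimes> z) = y \<otimes> (x \<otimes> z)"
  using commA Ac by (metis m_assoc)

lemma N_formula: "N k = b [^] k \<otimes> c [^] (k choose 2)"
proof (induction k)
  case 0 then show ?case using cc by (simp add: N_def numeral_2_eq_2)
next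
  case (Suc k)
  have NA: "N k \<in> A" using Suc bA cA A_pow A_mult by simp
  have "N (Suc k) = inv t \<otimes> N k \<otimes> t \<otimes> b"
    unfolding N_def using t uc bc by (simp add: inv_mult_group m_assoc u_def)
  also have "\<dots> = sig (N k) \<otimes> b" by (simp add: sig_def)
  also have "\<dots> = N k \<otimes> th (N k) \<otimes> b" using sig_th[OF NA] by simp
  also have "th (N k) = c [^] k"
  proof -
    have "th (N k) = th (b [^] k) \<otimes> th (c [^] (k choose 2))"
      unfolding Suc.IH by (rule th_mult[OF A_pow[OF bA] A_pow[OF cA]])
    also have "\<dots> = c [^] k \<otimes> \<one> [^] (k choose 2)"
      by (simp only: th_pow[OF bA] th_pow[OF cA] thc c_def[symmetric])
    also have "\<dots> = c [^] k" using cc by simp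
    finally show ?thesis .
  qed
  also have "N k \<otimes> c [^] k \<otimes> b = b [^] Suc k \<otimes> c [^] (Suc k choose 2)"
  proof -
    have e: "Suc k choose 2 = (k choose 2) + k"
      using binomial_Suc_Suc[of k 1] by (simp add: numeral_2_eq_2)
    have 1: "N k \<otimes> c [^] k \<otimes> b = b [^] k \<otimes> ((c [^] (k choose 2) \<otimes> c [^] k) \<otimes> b)"
      unfolding Suc using bc cc by (simp add: m_assoc)
    have 2: "(c [^] (k choose 2) \<otimes> c [^] k) \<otimes> b = b \<otimes> (c [^] (k choose 2) \<otimes> c [^] k)"
      by (rule commA) (auto simp: A_mult A_pow cA bA)
    have "N k \<otimes> c [^] k \<otimes> b = b [^] k \<otimes> (b \<otimes> (c [^] (k choose 2) \<otimes> c [^] k))"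
      using 1 2 by simp
    also have "\<dots> = b [^] Suc k \<otimes> c [^] (Suc k choose 2)"
      unfolding e using bc cc by (simp add: m_assoc nat_pow_mult)
    finally show ?thesis .
  qed
  finally show ?case .
qed

lemma NA: "N k \<in> A" using N_formula bA cA A_pow A_mult by simp
lemma Nc: "N k \<in> carrier G" using Ac NA .

lemma Nq: "N q = \<one>"
proof -
  have "b [^] q = \<one>"
  proof -
    have e: "q = p * p ^ (n - 1)" using n1 by (metis Suc_diff_1 less_le_trans power_Suc zero_less_one)
    have "b [^] q = (b [^] p) [^] (p ^ (n - 1))" unfolding e by (rule nat_pow_pow[OF bc, symmetric])
    thus ?thesis using bp by simp
  qed
  moreover have "c [^] (q choose 2) = \<one>"
  proof -
    obtain k where e: "q choose 2 = p * k" using prime_dvd_choose2_q[OF prime p2 n1] by blast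
    have "c [^] (q choose 2) = (c [^] p) [^] k" unfolding e by (rule nat_pow_pow[OF cc, symmetric])
    thus ?thesis using cp by simp
  qed
  ultimately show ?thesis unfolding N_formula[of q] by simp
qed

lemma u_pow: "u [^] k = t [^] k \<otimes> N k"
  unfolding N_def using t uc by (simp add: m_assoc[symmetric])

lemma N_add: "N (i + j) = inv (t [^] j) \<otimes> N i \<otimes> t [^] j \<otimes> N j"
proof -
  have ti: "t [^] i \<in> carrier G" "t [^] j \<in> carrier G" "u [^] i \<in> carrier G" "u [^] j \<in> carrier G"
    using t uc by auto
  have "N (i + j) = inv (t [^] i \<otimes> t [^] j) \<otimes> (u [^] i \<otimes> u [^] j)"
    unfolding N_def using t uc by (simp only: nat_pow_mult)
  also have "\<dots> = inv (t [^] j) \<otimes> (inv (t [^] i) \<otimes> u [^] i) \<otimes> u [^] j"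
    using ti by (simp only: inv_mult_group m_assoc inv_closed m_closed)
  also have "\<dots> = inv (t [^] j) \<otimes> N i \<otimes> (t [^] j \<otimes> N j)"
    unfolding N_def[of i] u_pow[of j] ..
  also have "\<dots> = inv (t [^] j) \<otimes> N i \<otimes> t [^] j \<otimes> N j"
    using ti Nc by (simp only: m_assoc inv_closed m_closed)
  finally show ?thesis .
qed

lemma N_period: "N (k + q) = N k"
proof -
  have "N (k + q) = inv (t [^] q) \<otimes> N k \<otimes> t [^] q \<otimes> \<one>" using N_add[of k q] unfolding Nq .
  also have "\<dots> = inv (t [^] q) \<otimes> (N k \<otimes> t [^] q)" using t Nc by (simp add: m_assoc)
  also have "N k \<otimes> t [^] q = t [^] q \<otimes> N k" by (rule commA[OF NA tq_in])
  also have "inv (t [^] q) \<otimes> (t [^] q \<otimes> N k) = N k" using t Nc by simp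
  finally show ?thesis .
qed

lemma N_period': "N (k + q * d) = N k"
proof (induction d)
  case 0 then show ?case by simp
next
  case (Suc d)
  have "N (k + q * Suc d) = N ((k + q * d) + q)" by (simp add: algebra_simps)
  also have "\<dots> = N (k + q * d)" by (rule N_period)
  finally show ?case using Suc by simp
qed

end


context bctx begin

lemma welldef_le:
  assumes g: "g \<in> carrier G" and gi: "g \<otimes> inv (t [^] i) \<in> A" and gj: "g \<otimes> inv (t [^] j) \<in> A"
    and ij: "i \<le> j"
  shows "N i = N j"
proof -
  have tc: "t [^] i \<in> carrier G" "t [^] (j - i) \<in> carrier G" using t by auto
  have tj: "t [^] j = t [^] i \<otimes> t [^] (j - i)" using ij t by (simp add: nat_pow_mult)
  have "inv (g \<otimes> inv (t [^] i)) \<otimes> (g \<otimes> inv (t [^] j)) \<in> A"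
    using gi gj A_inv A_mult by blast
  also have "inv (g \<otimes> inv (t [^] i)) \<otimes> (g \<otimes> inv (t [^] j)) = t [^] i \<otimes> inv (t [^] j)"
    using g tc t by (simp add: inv_mult_group m_assoc)
  finally have 1: "t [^] i \<otimes> inv (t [^] j) \<in> A" .
  have "inv (t [^] i) \<otimes> (t [^] i \<otimes> inv (t [^] j)) \<otimes> t [^] i \<in> A"
    using inv_op_closed1[OF tc(1) 1] .
  also have "inv (t [^] i) \<otimes> (t [^] i \<otimes> inv (t [^] j)) \<otimes> t [^] i = inv (t [^] (j - i))"
    unfolding tj using tc by (simp add: inv_mult_group m_assoc)
  finally have "inv (t [^] (j - i)) \<in> A" .
  hence "inv (inv (t [^] (j - i))) \<in> A" by (rule A_inv)
  hence "t [^] (j - i) \<in> A" using tc(2) by simp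
  hence "q dvd j - i" using tpow_in_A_iff by simp
  then obtain d where "j - i = q * d" by blast
  hence "j = i + q * d" using ij by simp
  thus ?thesis using N_period' by simp
qed

lemma welldef:
  assumes g: "g \<in> carrier G" and gi: "g \<otimes> inv (t [^] i) \<in> A" and gj: "g \<otimes> inv (t [^] j) \<in> A"
  shows "N i = N j"
proof (cases "i \<le> j")
  case True then show ?thesis using welldef_le[OF g gi gj] by simp
next
  case False then show ?thesis using welldef_le[OF g gj gi] by simp
qed

definition "phi g = g \<otimes> N (SOME i::nat. g \<otimes> inv (t [^] i) \<in> A)"

lemma phi_eq:
  assumes g: "g \<in> carrier G" and gi: "g \<otimes> inv (t [^] i) \<in> A"
  shows "phi g = g \<otimes> N i"
proof -
  have "g \<otimes> inv (t [^] (SOME i::nat. g \<otimes> inv (t [^] i) \<in> A)) \<in> A"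
    using gi by (rule someI)
  thus ?thesis unfolding phi_def using welldef[OF g _ gi] by simp
qed

lemma phi_c: "g \<in> carrier G \<Longrightarrow> phi g \<in> carrier G"
  unfolding phi_def using Nc by simp

lemma phi_hom: "phi \<in> hom G G"
proof (rule homI)
  fix g h assume g: "g \<in> carrier G" and h: "h \<in> carrier G"
  obtain i :: nat where i: "g \<otimes> inv (t [^] i) \<in> A" using idx_exists[OF g] by blast
  obtain j :: nat where j: "h \<otimes> inv (t [^] j) \<in> A" using idx_exists[OF h] by blast
  have tc: "t [^] i \<in> carrier G" "t [^] j \<in> carrier G" using t by auto
  define a where "a = h \<otimes> inv (t [^] j)"
  have aA: "a \<in> A" using j a_def by simp
  have ac: "a \<in> carrier G" using Ac aA .
  have ha: "h = a \<otimes> t [^] j" using h tc by (simp add: a_def m_assoc)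
  have "(g \<otimes> inv (t [^] i)) \<otimes> (t [^] i \<otimes> a \<otimes> inv (t [^] i)) \<in> A"
    using A_mult[OF i inv_op_closed2[OF tc(1) aA]] .
  also have "(g \<otimes> inv (t [^] i)) \<otimes> (t [^] i \<otimes> a \<otimes> inv (t [^] i)) = (g \<otimes> h) \<otimes> inv (t [^] (i + j))"
    unfolding ha using g tc ac t by (simp add: nat_pow_mult[symmetric] inv_mult_group m_assoc)
  finally have gh: "(g \<otimes> h) \<otimes> inv (t [^] (i + j)) \<in> A" .
  have "phi (g \<otimes> h) = g \<otimes> h \<otimes> N (i + j)" using phi_eq[OF _ gh] g h by simp
  also have "\<dots> = g \<otimes> (a \<otimes> (t [^] j \<otimes> (inv (t [^] j) \<otimes> (N i \<otimes> (t [^] j \<otimes> N j)))))"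
    unfolding N_add ha using g tc ac Nc by (simp add: m_assoc)
  also have "\<dots> = g \<otimes> (a \<otimes> (N i \<otimes> (t [^] j \<otimes> N j)))" using tc Nc by simp
  also have "a \<otimes> (N i \<otimes> (t [^] j \<otimes> N j)) = N i \<otimes> (a \<otimes> (t [^] j \<otimes> N j))"
    using commA[OF aA NA] ac Nc tc by (simp add: m_assoc[symmetric])
  also have "g \<otimes> (N i \<otimes> (a \<otimes> (t [^] j \<otimes> N j))) = phi g \<otimes> phi h"
    using phi_eq[OF g i] phi_eq[OF h j] unfolding ha using g ac tc Nc by (simp add: m_assoc)
  finally show "phi (g \<otimes> h) = phi g \<otimes> phi h" .
qed (auto simp: phi_c)

lemma finG: "finite (carrier G)"
proof -
  have "carrier G \<subseteq> (\<lambda>(a, i). a \<otimes> t [^] i) ` (A \<times> {..<q})"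
  proof
    fix g assume g: "g \<in> carrier G"
    obtain i :: nat where i: "i < q" "g \<otimes> inv (t [^] i) \<in> A" using idx_exists[OF g] by blast
    have "g = (g \<otimes> inv (t [^] i)) \<otimes> t [^] i" using g t by (simp add: m_assoc)
    thus "g \<in> (\<lambda>(a, i). a \<otimes> t [^] i) ` (A \<times> {..<q})" using i by force
  qed
  thus ?thesis using finA by (meson finite_SigmaI finite_imageI finite_lessThan finite_subset)
qed

lemma phi_iso: "phi \<in> iso G G"
proof -
  interpret gh: group_hom G G phi by unfold_locales (rule phi_hom)
  have inj: "inj_on phi (carrier G)"
  proof (rule gh.trivial_ker_imp_inj)
    show "kernel G G phi = {\<one>}"
    proof
      show "kernel G G phi \<subseteq> {\<one>}"
      proof
        fix g assume "g \<in> kernel G G phi"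
        hence g: "g \<in> carrier G" "phi g = \<one>" unfolding kernel_def by auto
        obtain i :: nat where i: "g \<otimes> inv (t [^] i) \<in> A" using idx_exists[OF g(1)] by blast
        have "g \<otimes> N i = \<one>" using phi_eq[OF g(1) i] g by simp
        hence "g = inv (N i)" using g Nc by (metis inv_equality inv_inv inv_closed)
        hence gA: "g \<in> A" using A_inv NA by simp
        have "phi g = g \<otimes> N 0" using phi_eq[OF g(1)] gA g by simp
        thus "g \<in> {\<one>}" using g N_formula[of 0] by (simp add: numeral_2_eq_2)
      qed
    qed (auto simp: kernel_def gh.hom_one)
  qed
  have "phi ` carrier G = carrier G"
    by (rule endo_inj_surj[OF finG _ inj]) (auto simp: phi_c)
  thus ?thesis using inj phi_hom by (simp add: iso_def bij_betw_def)
qed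

lemma th_N: "th (N k) = c [^] k"
proof -
  have "th (N k) = th (b [^] k) \<otimes> th (c [^] (k choose 2))"
    unfolding N_formula by (rule th_mult[OF A_pow[OF bA] A_pow[OF cA]])
  also have "\<dots> = c [^] k \<otimes> \<one> [^] (k choose 2)"
    by (simp only: th_pow[OF bA] th_pow[OF cA] thc c_def[symmetric])
  also have "\<dots> = c [^] k" using cc by simp
  finally show ?thesis .
qed

lemma c_one: "c = \<one>"
proof (rule ccontr)
  assume cne: "c \<noteq> \<one>"
  define T where "T = twisted_class_e G phi"
  have sub: "subgroup T G" unfolding T_def using twist phi_iso by blast
  have N1: "N 1 = b" using N_formula[of 1] bc by (simp add: binomial_eq_0)
  have "t \<otimes> inv (t [^] (1::nat)) = \<one>" using t by simp
  hence "t \<otimes> inv (t [^] (1::nat)) \<in> A" using subgroup.one_closed[OF subgroup_axioms] by simp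
  hence "phi t = t \<otimes> N 1" by (rule phi_eq[OF t])
  hence "phi t = t \<otimes> b" using N1 by simp
  hence "b = inv t \<otimes> phi t" using t bc by simp
  hence bT: "b \<in> T" unfolding T_def twisted_class_e_def using t by blast
  hence "b \<otimes> b \<in> T" using subgroup.m_closed[OF sub] by blast
  then obtain z where z: "z \<in> carrier G" "b \<otimes> b = inv z \<otimes> phi z"
    unfolding T_def twisted_class_e_def by blast
  obtain i :: nat where i: "z \<otimes> inv (t [^] i) \<in> A" using idx_exists[OF z(1)] by blast
  have bb: "b \<otimes> b = N i" using z phi_eq[OF z(1) i] Nc by simp
  have "c \<otimes> c = c [^] i" using th_N[of i] bb th_mult[OF bA bA] c_def by simp
  hence c2: "c [^] (2::nat) = c [^] i" using cc by (simp add: numeral_2_eq_2)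
  have ordc: "ord c = p"
  proof -
    have "ord c dvd p" using pow_eq_id[OF cc] cp by simp
    moreover have "ord c \<noteq> 1" using pow_eq_id[OF cc, of 1] cne cc by auto
    ultimately show ?thesis using prime unfolding prime_nat_iff by blast
  qed
  have pow1: "c [^] k = \<one> \<longleftrightarrow> p dvd k" for k :: nat using pow_eq_id[OF cc] ordc by simp
  have "i \<ge> 2"
  proof (rule ccontr)
    assume "\<not> i \<ge> 2"
    hence "c [^] i \<otimes> c [^] (2 - i) = c [^] (i + (2 - i))"
      using cc by (simp add: nat_pow_mult)
    also have "i + (2 - i) = 2" using \<open>\<not> i \<ge> 2\<close> by simp
    finally have "c [^] i \<otimes> c [^] (2 - i) = c [^] i \<otimes> \<one>"
      using c2 cc by simp
    hence "c [^] (2 - i) = \<one>" using cc by (metis l_cancel nat_pow_closed one_closed)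
    hence "p dvd 2 - i" using pow1 by simp
    moreover have "0 < 2 - i" "2 - i \<le> 2" using \<open>\<not> i \<ge> 2\<close> by auto
    ultimately show False using p2 by (meson dvd_imp_le le_trans not_le)
  qed
  have "c [^] (2::nat) \<otimes> c [^] (i - 2) = c [^] (2 + (i - 2))"
    using cc by (simp add: nat_pow_mult)
  also have "2 + (i - 2) = i" using \<open>i \<ge> 2\<close> by simp
  finally have "c [^] (2::nat) \<otimes> c [^] (i - 2) = c [^] (2::nat) \<otimes> \<one>"
    using c2 cc by simp
  hence "c [^] (i - 2) = \<one>" using cc by (metis l_cancel nat_pow_closed one_closed)
  hence "p dvd i - 2" using pow1 by simp
  then obtain s where s: "i = 2 + p * s" using \<open>i \<ge> 2\<close> by (metis dvd_def le_add_diff_inverse)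
  obtain k where k: "i choose 2 = 1 + p * k" using choose2_mod[OF prime p2, of s] s by blast
  have "b [^] i = b [^] (2::nat) \<otimes> (b [^] p) [^] s" unfolding s using bc by (simp add: nat_pow_mult nat_pow_pow)
  hence bi: "b [^] i = b \<otimes> b" using bp bc by (simp add: numeral_2_eq_2)
  have "c [^] (i choose 2) = c [^] (1::nat) \<otimes> c [^] (p * k)" unfolding k using cc by (simp only: nat_pow_mult)
  also have "\<dots> = c \<otimes> (c [^] p) [^] k" using cc by (simp add: nat_pow_pow)
  finally have "c [^] (i choose 2) = c \<otimes> (c [^] p) [^] k" .
  hence ci: "c [^] (i choose 2) = c" using cp cc by simp
  have "b \<otimes> b \<otimes> \<one> = b \<otimes> b \<otimes> c" using bb N_formula[of i] bi ci bc by simp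
  hence "\<one> = c" using bc cc by (metis m_closed l_cancel one_closed)
  thus False using cne by simp
qed

end

context setting2 begin

lemma base:
  assumes a: "a \<in> A" and ap: "a [^] p = \<one>"
  shows "th a = \<one>"
proof (rule ccontr)
  assume ne: "th a \<noteq> \<one>"
  define P where "P = (\<lambda>k. (th ^^ k) a = \<one>)"
  have Pq: "P q" using nilpotent[OF a ap] P_def by simp
  define k0 where "k0 = (LEAST k. P k)"
  have Pk0: "P k0" using LeastI[of P, OF Pq] k0_def by simp
  have notP: "\<not> P k" if "k < k0" for k using not_less_Least[of k P] that k0_def by simp
  have "k0 \<noteq> 0"
  proof
    assume "k0 = 0" hence "a = \<one>" using Pk0 by (simp add: P_def)
    thus False using ne th_one by simp
  qed
  moreover have "k0 \<noteq> 1" using Pk0 ne by (auto simp: P_def)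
  ultimately obtain m where m: "k0 = Suc (Suc m)" by (metis One_nat_def not0_implies_Suc)
  define b where "b = (th ^^ m) a"
  have bA: "b \<in> A" using thj_A[OF a] b_def by simp
  have bp: "b [^] p = \<one>" using thj_pow[OF a, of m p] ap thj_one b_def by simp
  have thth: "th (th b) = \<one>" using Pk0 m b_def P_def by simp
  have thb: "th b \<noteq> \<one>" using notP[of "Suc m"] m b_def P_def by simp
  interpret B: bctx A G t p n b by unfold_locales (use bA bp thth in auto)
  show False using B.c_one B.c_def thb by simp
qed

lemma claim2:
  shows "1 \<le> k \<Longrightarrow> a \<in> A \<Longrightarrow> a [^] (p ^ k) = \<one> \<Longrightarrow> th a [^] (p ^ (k - 1)) = \<one>"
proof (induction k arbitrary: a)
  case 0 then show ?case by (simp only: not_one_le_zero)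
next
  case (Suc k)
  have aA: "a \<in> A" by (rule Suc.prems(2))
  show ?case
  proof (cases "k = 0")
    case True
    have "a [^] p = \<one>" using Suc.prems(3) True by simp
    hence "th a = \<one>" by (rule base[OF aA])
    thus ?thesis using True by simp
  next
    case False
    have ac: "a \<in> carrier G" using Ac aA .
    have "(a [^] p) [^] (p ^ k) = a [^] (p * p ^ k)" by (rule nat_pow_pow[OF ac])
    also have "p * p ^ k = p ^ Suc k" by simp
    also have "a [^] (p ^ Suc k) = \<one>" by (rule Suc.prems(3))
    finally have h1: "(a [^] p) [^] (p ^ k) = \<one>" .
    have apA: "a [^] p \<in> A" by (rule A_pow[OF aA])
    have k1: "1 \<le> k" using False by simp
    have h2: "th (a [^] p) [^] (p ^ (k - 1)) = \<one>" by (rule Suc.IH[OF k1 apA h1])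
    have tc: "th a \<in> carrier G" using Ac th_A[OF aA] by blast
    have "th a [^] (p ^ k) = th a [^] (p * p ^ (k - 1))"
    proof -
      obtain k' where "k = Suc k'" using False by (cases k) auto
      thus ?thesis by simp
    qed
    also have "\<dots> = (th a [^] p) [^] (p ^ (k - 1))" by (rule nat_pow_pow[OF tc, symmetric])
    also have "th a [^] p = th (a [^] p)" by (rule th_pow[OF aA, symmetric])
    finally have "th a [^] (p ^ k) = \<one>" using h2 by simp
    thus ?thesis by simp
  qed
qed

end



theorem mainTheorem12:
  fixes G :: "('a, 'b) monoid_scheme" and A :: "'a set" and t :: 'a and p n :: nat
  assumes "group G"
    and "Factorial_Ring.prime p" and "p > 2" and "n \<ge> 1"
    and "A \<lhd> G"
    and "finite A"
    and "\<forall>a\<in>A. \<forall>b\<in>A. a \<otimes>\<^bsub>G\<^esub> b = b \<otimes>\<^bsub>G\<^esub> a"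
    and "\<exists>m. card A = p ^ m"
    and "t \<in> carrier G"
    and "(G Mod A) \<cong> integer_mod_group (p ^ n)"
    and "generate (G Mod A) {A #>\<^bsub>G\<^esub> t} = carrier (G Mod A)"
    and "\<forall>\<phi>\<in>iso G G. subgroup (twisted_class_e G \<phi>) G"
  shows "\<exists>\<theta>. \<theta> \<in> hom (G\<lparr>carrier := A\<rparr>) (G\<lparr>carrier := A\<rparr>)
            \<and> \<theta> ` A \<subseteq> Omega G p A n
            \<and> (\<forall>a\<in>A. inv\<^bsub>G\<^esub> t \<otimes>\<^bsub>G\<^esub> a \<otimes>\<^bsub>G\<^esub> t = a \<otimes>\<^bsub>G\<^esub> \<theta> a)
            \<and> (\<forall>k\<in>{1..n}. \<theta> ` Omega G p A k \<subseteq> Omega G p A (k - 1))"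
proof -
  interpret N: normal A G using assms(5) .
  have S0: "setting2 A G t p n"
    unfolding setting2_def setting2_axioms_def setting_def setting_axioms_def
    using assms N.normal_axioms by blast
  interpret S: setting2 A G t p n by (rule S0)
  show ?thesis
  proof (intro exI[of _ S.th] conjI ballI)
    show "S.th \<in> hom (G\<lparr>carrier := A\<rparr>) (G\<lparr>carrier := A\<rparr>)" by (rule S.th_hom)
    show "S.th ` A \<subseteq> Omega G p A n"
    proof
      fix y assume "y \<in> S.th ` A"
      then obtain a where a: "a \<in> A" "y = S.th a" by blast
      have "y \<in> A" using S.th_A a by simp
      moreover have "y [^]\<^bsub>G\<^esub> (p ^ n) = \<one>\<^bsub>G\<^esub>" using S.claim1[OF a(1)] a(2) by simp
      ultimately show "y \<in> Omega G p A n" unfolding Omega_def by simp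
    qed
    fix a assume a: "a \<in> A"
    show "inv\<^bsub>G\<^esub> t \<otimes>\<^bsub>G\<^esub> a \<otimes>\<^bsub>G\<^esub> t = a \<otimes>\<^bsub>G\<^esub> S.th a"
      using S.sig_th[OF a] by (simp add: S.sig_def)
  next
    fix k assume k: "k \<in> {1..n}"
    show "S.th ` Omega G p A k \<subseteq> Omega G p A (k - 1)"
    proof
      fix y assume "y \<in> S.th ` Omega G p A k"
      then obtain a where a: "a \<in> A" "a [^]\<^bsub>G\<^esub> (p ^ k) = \<one>\<^bsub>G\<^esub>" "y = S.th a"
        unfolding Omega_def by blast
      have k1: "1 \<le> k" using k by simp
      have "y \<in> A" using S.th_A a by simp
      moreover have "y [^]\<^bsub>G\<^esub> (p ^ (k - 1)) = \<one>\<^bsub>G\<^esub>" using S.claim2[OF k1 a(1) a(2)] a(3) by simp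
      ultimately show "y \<in> Omega G p A (k - 1)" unfolding Omega_def by simp
    qed
  qed
qed



end
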